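(* Let $r\ge 1$ and $t\ge 3$ be integers and $n=r(t-1)+2$. Then $q(K_1\nabla L_{r,t-1})<n+2t-3$.
   Context: All graphs are finite and simple. $q(G)$ denotes the largest eigenvalue of the signless Laplacian matrix $Q(G)=D(G)+A(G)$ of $G$. For graphs $G,H$ on disjoint vertex sets, $G\nabla H$ is their join (all edges between $V(G)$ and $V(H)$ added), and $rK_s$ denotes the disjoint union of $r$ copies of $K_s$. $L_{r,s}=K_1\nabla rK_s$, i.e. $r$ copies of $K_{s+1}$ sharing exactly one common vertex. Thus $K_1\nabla L_{r,t-1}$ has $r(t-1)+2=n$ vertices. *)

theory Defs
  imports Complex_Main
begin

record 'a graph =
  verts :: "'a set"
  adj :: "'a \<Rightarrow> 'a \<Rightarrow> bool"

definition simple_graph :: "'a graph \<Rightarrow> bool" where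
  "simple_graph G \<longleftrightarrow> finite (verts G) \<and>
     (\<forall>u v. adj G u v \<longrightarrow> u \<in> verts G \<and> v \<in> verts G) \<and>
     (\<forall>u v. adj G u v \<longrightarrow> adj G v u) \<and> (\<forall>u. \<not> adj G u u)"

definition degree :: "'a graph \<Rightarrow> 'a \<Rightarrow> nat" where
  "degree G u = card {v \<in> verts G. adj G u v}"

definition signless_laplacian :: "'a graph \<Rightarrow> 'a \<Rightarrow> 'a \<Rightarrow> real" where
  "signless_laplacian G u v =
     (if u = v then real (degree G u) else 0) + (if adj G u v then 1 else 0)"

definition is_eigenvalue :: "'a set \<Rightarrow> ('a \<Rightarrow> 'a \<Rightarrow> real) \<Rightarrow> real \<Rightarrow> bool" where
  "is_eigenvalue V M c \<longleftrightarrow> (\<exists>x :: 'a \<Rightarrow> real. (\<exists>v\<in>V. x v \<noteq> 0) \<and>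
      (\<forall>u\<in>V. (\<Sum>v\<in>V. M u v * x v) = c * x u))"

definition q :: "'a graph \<Rightarrow> real" where
  "q G = Max {c. is_eigenvalue (verts G) (signless_laplacian G) c}"

definition join :: "'a graph \<Rightarrow> 'b graph \<Rightarrow> ('a + 'b) graph" where
  "join G H = \<lparr> verts = Inl ` verts G \<union> Inr ` verts H,
     adj = (\<lambda>x y. case (x, y) of
        (Inl a, Inl b) \<Rightarrow> adj G a b
      | (Inr a, Inr b) \<Rightarrow> adj H a b
      | (Inl a, Inr b) \<Rightarrow> a \<in> verts G \<and> b \<in> verts H
      | (Inr a, Inl b) \<Rightarrow> a \<in> verts H \<and> b \<in> verts G) \<rparr>"

definition K1 :: "unit graph" where
  "K1 = \<lparr> verts = {()}, adj = (\<lambda>_ _. False) \<rparr>"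

text \<open>rK_s: r disjoint copies of K_s; vertex (i,j) is vertex j of copy i.\<close>
definition copies_K :: "nat \<Rightarrow> nat \<Rightarrow> (nat \<times> nat) graph" where
  "copies_K r s = \<lparr> verts = {..<r} \<times> {..<s},
     adj = (\<lambda>(i, j) (i', j'). i < r \<and> i' < r \<and> j < s \<and> j' < s \<and> i = i' \<and> j \<noteq> j') \<rparr>"

definition L :: "nat \<Rightarrow> nat \<Rightarrow> (unit + nat \<times> nat) graph" where
  "L r s = join K1 (copies_K r s)"

end

theory Submission imports Defs "HOL-Computational_Algebra.Polynomial" begin

definition GG :: "nat \<Rightarrow> nat \<Rightarrow> (unit + (unit + nat \<times> nat)) graph" where
  "GG r s = join K1 (L r s)"

lemma verts_GG: "verts (GG r s) = insert (Inl ()) (insert (Inr (Inl ())) ((Inr o Inr) ` ({..<r}\<times>{..<s})))"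
  by (auto simp: GG_def join_def L_def K1_def copies_K_def)

lemma sum_GG: "sum f (verts (GG r s)) = f (Inl ()) + f (Inr (Inl ())) + (\<Sum>i<r. \<Sum>j<s. f (Inr (Inr (i,j))))"
proof -
  have inj: "inj_on (Inr o Inr :: nat\<times>nat \<Rightarrow> unit + (unit + nat \<times> nat)) A" for A
    by (auto simp: inj_on_def)
  have "sum f ((Inr o Inr) ` ({..<r}\<times>{..<s})) = (\<Sum>p\<in>{..<r}\<times>{..<s}. f (Inr (Inr p)))"
    by (subst sum.reindex[OF inj]) simp
  also have "\<dots> = (\<Sum>i<r. \<Sum>j<s. f (Inr (Inr (i,j))))"
    by (simp add: sum.cartesian_product)
  finally show ?thesis unfolding verts_GG by (simp add: image_iff add.assoc)
qed

lemma adj_GG: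
  "adj (GG r s) (Inl ()) (Inl ()) = False"
  "adj (GG r s) (Inl ()) (Inr (Inl ())) = True"
  "adj (GG r s) (Inl ()) (Inr (Inr (i,j))) = (i<r \<and> j<s)"
  "adj (GG r s) (Inr (Inl ())) (Inl ()) = True"
  "adj (GG r s) (Inr (Inl ())) (Inr (Inl ())) = False"
  "adj (GG r s) (Inr (Inl ())) (Inr (Inr (i,j))) = (i<r \<and> j<s)"
  "adj (GG r s) (Inr (Inr (i,j))) (Inl ()) = (i<r \<and> j<s)"
  "adj (GG r s) (Inr (Inr (i,j))) (Inr (Inl ())) = (i<r \<and> j<s)"
  "adj (GG r s) (Inr (Inr (i,j))) (Inr (Inr (i',j'))) = (i<r \<and> i'<r \<and> j<s \<and> j'<s \<and> i=i' \<and> j\<noteq>j')"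
  by (simp_all add: GG_def join_def L_def K1_def copies_K_def inj_image_mem_iff)

lemma deg_sum: "finite V \<Longrightarrow> real (card {v\<in>V. P v}) = (\<Sum>v\<in>V. if P v then 1 else 0)"
proof -
  assume f: "finite V"
  have "real (card {v\<in>V. P v}) = (\<Sum>v\<in>{v\<in>V. P v}. (1::real))" by simp
  also have "\<dots> = (\<Sum>v\<in>V. if P v then 1 else 0)" by (rule sum.inter_filter[OF f])
  finally show ?thesis .
qed

lemma finite_GG: "finite (verts (GG r s))"
  by (simp add: verts_GG)

lemma Msum: "(\<Sum>v\<in>verts (GG r s). signless_laplacian (GG r s) u v * x v)
   = real (Defs.degree (GG r s) u) * x u + (\<Sum>v\<in>verts (GG r s). if adj (GG r s) u v then x v else 0)"
  if "u \<in> verts (GG r s)"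
proof -
  have "(\<Sum>v\<in>verts (GG r s). signless_laplacian (GG r s) u v * x v)
     = (\<Sum>v\<in>verts (GG r s). (if u = v then real (Defs.degree (GG r s) u) * x v else 0) + (if adj (GG r s) u v then x v else 0))"
    by (rule sum.cong) (auto simp: signless_laplacian_def algebra_simps)
  also have "\<dots> = real (Defs.degree (GG r s) u) * x u + (\<Sum>v\<in>verts (GG r s). if adj (GG r s) u v then x v else 0)"
    using that finite_GG by (simp add: sum.distrib)
  finally show ?thesis .
qed

lemma degree_real: "real (Defs.degree (GG r s) u) = (\<Sum>v\<in>verts (GG r s). if adj (GG r s) u v then 1 else 0)"
  unfolding Defs.degree_def by (rule deg_sum[OF finite_GG])

lemma sum_ne: "j < (s::nat) \<Longrightarrow> (\<Sum>j'<s. if j \<noteq> j' then f j' else 0) = (\<Sum>j'<s. f j') - (f j :: real)"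
proof -
  assume "j < s"
  have "(\<Sum>j'<s. f j') = (\<Sum>j'<s. (if j = j' then f j' else 0) + (if j \<noteq> j' then f j' else 0))"
    by (rule sum.cong) auto
  also have "\<dots> = f j + (\<Sum>j'<s. if j \<noteq> j' then f j' else 0)"
  proof -
    have "(\<Sum>j'<s. if j = j' then f j' else 0) = f j" using \<open>j<s\<close> by (subst sum.delta'[OF finite_lessThan]) simp
    then show ?thesis by (simp add: sum.distrib)
  qed
  finally show ?thesis by simp
qed

lemma mem_GG[simp]: "Inl () \<in> verts (GG r s)" "Inr (Inl ()) \<in> verts (GG r s)"
  "i < r \<Longrightarrow> j < s \<Longrightarrow> Inr (Inr (i,j)) \<in> verts (GG r s)"
  by (auto simp: verts_GG)

lemma eq_a: "(\<Sum>v\<in>verts (GG r s). signless_laplacian (GG r s) (Inl ()) v * x v)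
   = real (r*s+1) * x (Inl ()) + x (Inr (Inl ())) + (\<Sum>i<r. \<Sum>j<s. x (Inr (Inr (i,j))))"
  using Msum[of "Inl ()" r s x] unfolding degree_real sum_GG by (simp add: adj_GG)

lemma eq_b: "(\<Sum>v\<in>verts (GG r s). signless_laplacian (GG r s) (Inr (Inl ())) v * x v)
   = x (Inl ()) + real (r*s+1) * x (Inr (Inl ())) + (\<Sum>i<r. \<Sum>j<s. x (Inr (Inr (i,j))))"
  using Msum[of "Inr (Inl ())" r s x] unfolding degree_real sum_GG by (simp add: adj_GG)

lemma eq_c: assumes "i < r" "j < s"
  shows "(\<Sum>v\<in>verts (GG r s). signless_laplacian (GG r s) (Inr (Inr (i,j))) v * x v)
   = x (Inl ()) + x (Inr (Inl ())) + real s * x (Inr (Inr (i,j))) + (\<Sum>j'<s. x (Inr (Inr (i,j'))))"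
proof -
  have gen: "(\<Sum>i'<r. \<Sum>j'<s. if adj (GG r s) (Inr (Inr (i,j))) (Inr (Inr (i',j'))) then f (i',j') else 0)
     = (\<Sum>j'<s. f (i,j')) - f (i,j)" for f :: "nat \<times> nat \<Rightarrow> real"
  proof -
    have "(\<Sum>i'<r. \<Sum>j'<s. if adj (GG r s) (Inr (Inr (i,j))) (Inr (Inr (i',j'))) then f (i',j') else 0)
      = (\<Sum>i'<r. if i = i' then (\<Sum>j'<s. if j \<noteq> j' then f (i,j') else 0) else 0)"
    proof (rule sum.cong[OF refl])
      fix i' assume "i' \<in> {..<r}"
      show "(\<Sum>j'<s. if adj (GG r s) (Inr (Inr (i,j))) (Inr (Inr (i',j'))) then f (i',j') else 0)
        = (if i = i' then (\<Sum>j'<s. if j \<noteq> j' then f (i,j') else 0) else 0)"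
      proof (cases "i = i'")
        case True
        show ?thesis using True
          by (simp, intro sum.cong refl) (use assms \<open>i' \<in> {..<r}\<close> in \<open>simp add: adj_GG\<close>)
      next
        case False
        then show ?thesis by (simp add: adj_GG)
      qed
    qed
    also have "\<dots> = (\<Sum>j'<s. if j \<noteq> j' then f (i,j') else 0)"
      using assms by (subst sum.delta') auto
    also have "\<dots> = (\<Sum>j'<s. f (i,j')) - f (i,j)"
      using sum_ne[OF assms(2), of "\<lambda>j'. f (i,j')"] by simp
    finally show ?thesis .
  qed
  have D: "real (Defs.degree (GG r s) (Inr (Inr (i,j)))) = 2 + (real s - 1)"
    unfolding degree_real sum_GG using gen[of "\<lambda>_. 1"] assms by (simp add: adj_GG)
  have A: "(\<Sum>v\<in>verts (GG r s). if adj (GG r s) (Inr (Inr (i,j))) v then x v else 0)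
     = x (Inl ()) + x (Inr (Inl ())) + ((\<Sum>j'<s. x (Inr (Inr (i,j')))) - x (Inr (Inr (i,j))))"
    unfolding sum_GG using gen[of "\<lambda>p. x (Inr (Inr p))"] assms by (simp add: adj_GG)
  have "(\<Sum>v\<in>verts (GG r s). signless_laplacian (GG r s) (Inr (Inr (i,j))) v * x v)
     = real (Defs.degree (GG r s) (Inr (Inr (i,j)))) * x (Inr (Inr (i,j))) + (\<Sum>v\<in>verts (GG r s). if adj (GG r s) (Inr (Inr (i,j))) v then x v else 0)"
    by (rule Msum) (simp add: assms)
  also have "\<dots> = (2 + (real s - 1)) * x (Inr (Inr (i,j))) + (x (Inl ()) + x (Inr (Inl ())) + ((\<Sum>j'<s. x (Inr (Inr (i,j')))) - x (Inr (Inr (i,j)))))"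
    by (simp only: D A)
  also have "\<dots> = x (Inl ()) + x (Inr (Inl ())) + real s * x (Inr (Inr (i,j))) + (\<Sum>j'<s. x (Inr (Inr (i,j'))))"
    by (simp add: algebra_simps)
  finally show ?thesis .
qed

lemma core:
  fixes r s :: nat and c xa xb :: real and y :: "nat \<Rightarrow> nat \<Rightarrow> real"
  assumes r: "r \<ge> 1" and s: "s \<ge> 2"
  and ea: "real (r*s+1) * xa + xb + (\<Sum>i<r. \<Sum>j<s. y i j) = c * xa"
  and eb: "xa + real (r*s+1) * xb + (\<Sum>i<r. \<Sum>j<s. y i j) = c * xb"
  and ec: "\<And>i j. i < r \<Longrightarrow> j < s \<Longrightarrow> xa + xb + real s * y i j + (\<Sum>j'<s. y i j') = c * y i j"
  and nz: "xa \<noteq> 0 \<or> xb \<noteq> 0 \<or> (\<exists>i<r. \<exists>j<s. y i j \<noteq> 0)"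
  shows "c = real s \<or> c = real (r*s) \<or> c = 2 * real s \<or> (c - real (r*s+2)) * (c - 2 * real s) = 2 * real (r*s)"
proof (rule ccontr)
  assume "\<not> ?thesis"
  hence c1: "c \<noteq> real s" and c2: "c \<noteq> real (r*s)" and c3: "c \<noteq> 2 * real s"
    and c4: "(c - real (r*s+2)) * (c - 2 * real s) \<noteq> 2 * real (r*s)" by auto
  have s0: "0 < s" using s by simp
  have yc: "y i j = y i 0" if "i < r" "j < s" for i j
  proof -
    have "(c - real s) * y i j = xa + xb + (\<Sum>j'<s. y i j')" using ec[OF that] by (simp add: algebra_simps)
    moreover have "(c - real s) * y i 0 = xa + xb + (\<Sum>j'<s. y i j')" using ec[OF that(1) s0] by (simp add: algebra_simps)
    ultimately have "(c - real s) * (y i j - y i 0) = 0" by (simp add: algebra_simps)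
    thus ?thesis using c1 by simp
  qed
  have Si: "(\<Sum>j'<s. y i j') = real s * y i 0" if "i < r" for i
  proof -
    have "(\<Sum>j'<s. y i j') = (\<Sum>j'<s. y i 0)"
      by (rule sum.cong[OF refl]) (rule yc[OF that], simp)
    thus ?thesis by simp
  qed
  have yi: "(c - 2 * real s) * y i 0 = xa + xb" if "i < r" for i
    using ec[OF that s0] Si[OF that] by (simp add: algebra_simps)
  have "real (r*s) * (xa - xb) = c * (xa - xb)" using ea eb by (simp add: algebra_simps)
  hence "(real (r*s) - c) * (xa - xb) = 0" by (simp add: algebra_simps)
  hence xab: "xb = xa" using c2 by simp
  have c3': "c - 2 * real s \<noteq> 0" using c3 by simp
  have yv: "y i 0 = 2 * xa / (c - 2 * real s)" if "i < r" for i
    using yi[OF that] xab c3' by (simp add: field_simps)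
  have T: "(\<Sum>i<r. \<Sum>j<s. y i j) = real r * real s * (2 * xa / (c - 2 * real s))"
  proof -
    have "(\<Sum>i<r. \<Sum>j<s. y i j) = (\<Sum>i<r. real s * (2 * xa / (c - 2 * real s)))"
      by (rule sum.cong[OF refl]) (simp add: Si yv)
    thus ?thesis by simp
  qed
  have "(real (r*s+1) + 1 - c) * xa + real r * real s * (2 * xa / (c - 2 * real s)) = 0"
    using ea xab T by (simp add: algebra_simps)
  hence "((real (r*s+1) + 1 - c) * (c - 2 * real s) + 2 * real r * real s) * xa = 0"
    using c3' by (simp add: field_simps)
  moreover have "(real (r*s+1) + 1 - c) * (c - 2 * real s) + 2 * real r * real s \<noteq> 0"
    using c4 by (simp add: algebra_simps)
  ultimately have xa0: "xa = 0" by simp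
  hence "y i j = 0" if "i < r" "j < s" for i j using yc[OF that] yv[OF that(1)] by simp
  thus False using nz xa0 xab by auto
qed

lemma bound:
  fixes r s :: nat and c :: real
  assumes r: "r \<ge> 1" and s: "s \<ge> 2"
  and h: "(c - real (r*s+2)) * (c - 2 * real s) = 2 * real (r*s)"
  shows "c < real (r*s) + 2 * real s + 1"
proof (rule ccontr)
  assume "\<not> ?thesis"
  hence cb: "c \<ge> real (r*s) + 2 * real s + 1" by simp
  have h1: "c - real (r*s+2) \<ge> 2 * real s - 1" using cb by simp
  have h2: "c - 2 * real s \<ge> real (r*s) + 1" using cb by simp
  have p1: "2 * real s - 1 \<ge> 0" using s by simp
  have "(2 * real s - 1) * (real (r*s) + 1) \<le> (c - real (r*s+2)) * (c - 2 * real s)"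
    by (rule mult_mono[OF h1 h2 _ ]) (use h1 p1 in auto)
  moreover have "(2 * real s - 1) * (real (r*s) + 1) > 2 * real (r*s)"
  proof -
    have "real (r*s) * (2 * real s - 3) \<ge> 0" using s by (intro mult_nonneg_nonneg) auto
    moreover have "(2 * real s - 1) * (real (r*s) + 1) = 2 * real (r*s) + real (r*s) * (2 * real s - 3) + (2 * real s - 1)"
      by (simp add: algebra_simps)
    moreover have "2 * real s - 1 > 0" using s by simp
    ultimately show ?thesis by linarith
  qed
  ultimately show False using h by simp
qed

lemma verts_cases:
  assumes "v \<in> verts (GG r s)"
  obtains "v = Inl ()" | "v = Inr (Inl ())" | i j where "i < r" "j < s" "v = Inr (Inr (i,j))"
  using assms unfolding verts_GG by auto

lemma eig_cases:
  assumes r: "r \<ge> 1" and s: "s \<ge> 2"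
    and e: "is_eigenvalue (verts (GG r s)) (signless_laplacian (GG r s)) c"
  shows "c = real s \<or> c = real (r*s) \<or> c = 2 * real s \<or> (c - real (r*s+2)) * (c - 2 * real s) = 2 * real (r*s)"
proof -
  obtain x where nz: "\<exists>v\<in>verts (GG r s). x v \<noteq> 0"
    and ev: "\<forall>u\<in>verts (GG r s). (\<Sum>v\<in>verts (GG r s). signless_laplacian (GG r s) u v * x v) = c * x u"
    using e unfolding is_eigenvalue_def by blast
  have ea: "real (r*s+1) * x (Inl ()) + x (Inr (Inl ())) + (\<Sum>i<r. \<Sum>j<s. x (Inr (Inr (i,j)))) = c * x (Inl ())"
    using ev[rule_format, of "Inl ()"] eq_a[of r s x] by simp
  have eb: "x (Inl ()) + real (r*s+1) * x (Inr (Inl ())) + (\<Sum>i<r. \<Sum>j<s. x (Inr (Inr (i,j)))) = c * x (Inr (Inl ()))"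
    using ev[rule_format, of "Inr (Inl ())"] eq_b[of r s x] by simp
  have ec: "x (Inl ()) + x (Inr (Inl ())) + real s * x (Inr (Inr (i,j))) + (\<Sum>j'<s. x (Inr (Inr (i,j')))) = c * x (Inr (Inr (i,j)))"
    if "i < r" "j < s" for i j
    using ev[rule_format, of "Inr (Inr (i,j))"] eq_c[OF that, of x] that by simp
  have nz': "x (Inl ()) \<noteq> 0 \<or> x (Inr (Inl ())) \<noteq> 0 \<or> (\<exists>i<r. \<exists>j<s. x (Inr (Inr (i,j))) \<noteq> 0)"
  proof -
    obtain v where v: "v \<in> verts (GG r s)" "x v \<noteq> 0" using nz by blast
    from v(1) show ?thesis by (rule verts_cases) (use v(2) in auto)
  qed
  show ?thesis
    by (rule core[where xa="x (Inl ())" and xb="x (Inr (Inl ()))" and y="\<lambda>i j. x (Inr (Inr (i,j)))" and c=c,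
          OF r s ea eb ec nz'])
qed

lemma rs_eig:
  "is_eigenvalue (verts (GG r s)) (signless_laplacian (GG r s)) (real (r*s))"
proof -
  define x :: "unit + (unit + nat \<times> nat) \<Rightarrow> real" where
    "x = (\<lambda>v. if v = Inl () then 1 else if v = Inr (Inl ()) then -1 else 0)"
  have "(\<Sum>v\<in>verts (GG r s). signless_laplacian (GG r s) u v * x v) = real (r*s) * x u"
    if "u \<in> verts (GG r s)" for u
    using that
  proof (rule verts_cases)
    assume "u = Inl ()" thus ?thesis by (simp add: eq_a x_def)
  next
    assume "u = Inr (Inl ())" thus ?thesis by (simp add: eq_b x_def algebra_simps)
  next
    fix i j assume "i < r" "j < s" "u = Inr (Inr (i,j))"
    thus ?thesis by (simp add: eq_c x_def)
  qed
  moreover have "x (Inl ()) \<noteq> 0" by (simp add: x_def)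
  ultimately show ?thesis unfolding is_eigenvalue_def
    by (intro exI[of _ x]) auto
qed

theorem lemma2p6:
  fixes r t n :: nat
  assumes "r \<ge> 1" and "t \<ge> 3" and "n = r * (t - 1) + 2"
  shows "q (join K1 (L r (t - 1))) < real n + 2 * real t - 3"
proof -
  define s where "s = t - 1"
  have s2: "s \<ge> 2" using assms(2) by (simp add: s_def)
  have ts: "real t = real s + 1" using assms(2) by (simp add: s_def)
  have Beq: "real n + 2 * real t - 3 = real (r*s) + 2 * real s + 1"
  proof -
    have nrs: "n = r*s + 2" using assms(3) by (simp add: s_def)
    show ?thesis using nrs ts by simp
  qed
  define E where "E = {c. is_eigenvalue (verts (GG r s)) (signless_laplacian (GG r s)) c}"
  define P where "P = [: real (r*s+2) * (2 * real s) - 2 * real (r*s), - (real (r*s+2) + 2 * real s), 1 :]"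
  have P0: "P \<noteq> 0" by (simp add: P_def)
  have sub: "E \<subseteq> {real s, real (r*s), 2 * real s} \<union> {c. poly P c = 0}"
  proof
    fix c assume "c \<in> E"
    hence "c = real s \<or> c = real (r*s) \<or> c = 2 * real s \<or> (c - real (r*s+2)) * (c - 2 * real s) = 2 * real (r*s)"
      using eig_cases[OF assms(1) s2] by (simp add: E_def)
    moreover have "poly P c = (c - real (r*s+2)) * (c - 2 * real s) - 2 * real (r*s)"
      by (simp add: P_def algebra_simps)
    ultimately show "c \<in> {real s, real (r*s), 2 * real s} \<union> {c. poly P c = 0}" by auto
  qed
  have fin: "finite E"
    by (rule finite_subset[OF sub]) (simp add: poly_roots_finite[OF P0])
  have ne: "real (r*s) \<in> E" using rs_eig by (simp add: E_def)
  have lt: "c < real (r*s) + 2 * real s + 1" if "c \<in> E" for c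
  proof -
    have "c = real s \<or> c = real (r*s) \<or> c = 2 * real s \<or> (c - real (r*s+2)) * (c - 2 * real s) = 2 * real (r*s)"
      using eig_cases[OF assms(1) s2] that by (simp add: E_def)
    moreover have p: "0 \<le> real (r*s)" "0 \<le> real s" by simp_all
    ultimately show ?thesis using bound[OF assms(1) s2, of c] by (elim disjE) linarith+
  qed
  have qE: "q (join K1 (L r (t - 1))) = Max E"
    unfolding q_def E_def GG_def s_def ..
  have "Max E \<in> E" using fin ne by (intro Max_in) auto
  hence "Max E < real (r*s) + 2 * real s + 1" by (rule lt)
  thus ?thesis unfolding qE Beq .
qed

end
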